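(* Let $q=2^n$, let $B$ be a $k$-subset of $\mathrm{GF}(q)$, and let $E$ be a subset of $\mathrm{GF}(q)$ such that $\hat f_B(\mu)=\hat f_E(\mu^d)$ for all $\mu\in\mathrm{GF}(q)$, where $d$ is an integer with $\gcd(d,q-1)=1$. Let $a,b\in\mathrm{GF}(q)^*$. Then \[\sum_{x,y\in\mathrm{GF}(q)}(-1)^{f_B(x)+f_B(y)+f_B(ax+by)}=q^2-6qk+12k^2-8N_E(a^d,b^d,1).\] In particular, $N_B(a,b,1)=N_E(a^d,b^d,1)$.
   Context: $\mathrm{Tr}$ is the absolute trace $\mathrm{GF}(2^n)\to\mathrm{GF}(2)$. For a subset $S\subseteq\mathrm{GF}(q)$, $f_S$ is its characteristic function as a Boolean function, and $\hat f(\mu)=\sum_{x\in\mathrm{GF}(2^n)}(-1)^{f(x)+\mathrm{Tr}(\mu x)}$ is the Walsh transform. For $S\subseteq\mathrm{GF}(q)$ and $a,b,c\in\mathrm{GF}(q)$, $N_S(a,b,c)$ is the number of triples $(x,y,z)\in S^3$ with $ax+by+cz=0$. *)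

theory Defs
  imports Main
begin

text \<open>GF(2^n) is modelled as a finite field type 'a with CARD('a) = 2^n and characteristic 2.\<close>

definition abs_trace :: "nat \<Rightarrow> 'a::field \<Rightarrow> 'a" where
  "abs_trace n x = (\<Sum>i<n. x ^ (2 ^ i))"

text \<open>(-1)^t for t in GF(2) (viewed inside the field): 1 if t = 0, -1 otherwise.\<close>
definition sgn2 :: "'a::field \<Rightarrow> int" where
  "sgn2 t = (if t = 0 then 1 else -1)"

definition charf :: "'a set \<Rightarrow> 'a \<Rightarrow> 'a::field" where
  "charf S x = (if x \<in> S then 1 else 0)"

definition walsh :: "nat \<Rightarrow> 'a::{field,finite} set \<Rightarrow> 'a \<Rightarrow> int" where
  "walsh n S \<mu> = (\<Sum>x\<in>UNIV. sgn2 (charf S x + abs_trace n (\<mu> * x)))"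

definition N3 :: "'a::field set \<Rightarrow> 'a \<Rightarrow> 'a \<Rightarrow> 'a \<Rightarrow> nat" where
  "N3 S a b c = card {(x, y, z). x \<in> S \<and> y \<in> S \<and> z \<in> S \<and> a * x + b * y + c * z = 0}"

end

theory Submission
  imports Defs "HOL-Computational_Algebra.Polynomial"
begin

lemma fermat:
  fixes x :: "'a::{field,finite}"
  assumes "x \<noteq> 0"
  shows "x ^ (card (UNIV::'a set) - 1) = 1"
proof -
  let ?U = "UNIV - {0::'a}"
  have bij: "bij_betw (\<lambda>y. x * y) ?U ?U"
    unfolding bij_betw_def inj_on_def
  proof (intro conjI ballI impI)
    show "x * y = x * z \<Longrightarrow> y = z" for y z using assms by simp
    show "(*) x ` ?U = ?U"
    proof
      show "(*) x ` ?U \<subseteq> ?U" using assms by auto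
      show "?U \<subseteq> (*) x ` ?U"
      proof
        fix z assume "z \<in> ?U"
        hence "z = x * (inverse x * z)" "inverse x * z \<in> ?U" using assms by (auto simp: field_simps)
        thus "z \<in> (*) x ` ?U" by blast
      qed
    qed
  qed
  have "(\<Prod>y\<in>?U. x * y) = (\<Prod>y\<in>?U. y)"
    using prod.reindex_bij_betw[OF bij, of "\<lambda>y. y"] by simp
  moreover have "(\<Prod>y\<in>?U. x * y) = x ^ card ?U * (\<Prod>y\<in>?U. y)"
    by (simp add: prod.distrib)
  moreover have "card ?U = card (UNIV::'a set) - 1" by (simp add: card_Diff_subset)
  moreover have "(\<Prod>y\<in>?U. y) \<noteq> 0" by simp
  ultimately show ?thesis by simp
qed

lemma card_ge2: "card (UNIV::'a::{field,finite} set) \<ge> 2"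
proof -
  have "{0::'a, 1} \<subseteq> UNIV" by simp
  hence "card {0::'a,1} \<le> card (UNIV::'a set)" by (rule card_mono[rotated]) simp
  thus ?thesis by simp
qed

lemma fermat2:
  fixes x :: "'a::{field,finite}"
  shows "x ^ card (UNIV::'a set) = x"
proof (cases "x = 0")
  case True thus ?thesis using card_ge2[where 'a='a] by simp
next
  case False
  have "x ^ card (UNIV::'a set) = x * x ^ (card (UNIV::'a set) - 1)"
    using card_ge2[where 'a='a] by (metis Suc_diff_1 le0 not_numeral_le_zero order_less_le_trans power_Suc zero_less_iff_neq_zero)
  thus ?thesis using fermat[OF False] by simp
qed

lemma two_zero:
  fixes x :: "'a::field"
  assumes "(1::'a) + 1 = 0"
  shows "x + x = 0"
proof -
  have "x + x = (1 + 1) * x" by (simp add: distrib_right)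
  thus ?thesis using assms by simp
qed

lemma neg_self:
  fixes x :: "'a::field"
  assumes "(1::'a) + 1 = 0"
  shows "- x = x"
  using two_zero[OF assms, of x] by (simp add: add_eq_0_iff eq_neg_iff_add_eq_0)

lemma frob:
  fixes x y :: "'a::field"
  assumes "(1::'a) + 1 = 0"
  shows "(x + y) ^ (2 ^ i) = x ^ (2 ^ i) + y ^ (2 ^ i)"
proof (induction i)
  case 0 thus ?case by simp
next
  case (Suc i)
  have sq: "(u + v) ^ 2 = u ^ 2 + v ^ 2" for u v :: 'a
  proof -
    have "(u + v) ^ 2 = u^2 + v^2 + (u*v + u*v)" by (simp add: power2_eq_square algebra_simps)
    thus ?thesis using two_zero[OF assms, of "u*v"] by simp
  qed
  have "(x + y) ^ (2 ^ Suc i) = ((x + y) ^ (2 ^ i)) ^ 2" by (simp add: power_mult[symmetric] mult.commute)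
  also have "\<dots> = (x ^ (2 ^ i) + y ^ (2 ^ i)) ^ 2" using Suc by simp
  also have "\<dots> = x ^ (2 ^ Suc i) + y ^ (2 ^ Suc i)" by (simp add: sq power_mult[symmetric] mult.commute)
  finally show ?case .
qed

lemma frob_sum:
  fixes f :: "'b \<Rightarrow> 'a::field"
  assumes "(1::'a) + 1 = 0"
  shows "(\<Sum>i\<in>A. f i) ^ 2 = (\<Sum>i\<in>A. f i ^ 2)"
proof (induction A rule: infinite_finite_induct)
  case (insert x F)
  thus ?case using frob[OF assms, of "f x" "sum f F" 1] by simp
qed auto

lemma trace_add:
  fixes x y :: "'a::field"
  assumes "(1::'a) + 1 = 0"
  shows "abs_trace n (x + y) = abs_trace n x + abs_trace n y"
  unfolding abs_trace_def by (simp add: frob[OF assms] sum.distrib)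

lemma trace_01:
  fixes x :: "'a::{field,finite}"
  assumes "(1::'a) + 1 = 0" and q: "card (UNIV::'a set) = 2 ^ n"
  shows "abs_trace n x = 0 \<or> abs_trace n x = 1"
proof -
  have n: "n \<ge> 1" using card_ge2[where 'a='a] q by (cases n) auto
  have "abs_trace n x ^ 2 = (\<Sum>i<n. x ^ (2 ^ Suc i))"
    unfolding abs_trace_def frob_sum[OF assms(1)]
    by (simp add: power_mult[symmetric] mult.commute)
  also have "\<dots> = (\<Sum>i<Suc n. x ^ (2 ^ i)) - x"
    using sum.lessThan_Suc_shift[of "\<lambda>i. x ^ (2 ^ i)" n] by simp
  also have "\<dots> = abs_trace n x + x ^ (2 ^ n) - x"
    by (simp add: abs_trace_def)
  also have "\<dots> = abs_trace n x" using fermat2[of x] q by simp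
  finally have "abs_trace n x * (abs_trace n x - 1) = 0" by (simp add: power2_eq_square algebra_simps)
  thus ?thesis by simp
qed


lemma sgn2_add:
  fixes u v :: "'a::field"
  assumes c: "(1::'a) + 1 = 0" and "u = 0 \<or> u = 1" and "v = 0 \<or> v = 1"
  shows "sgn2 (u + v) = sgn2 u * sgn2 v"
  using assms by (auto simp: sgn2_def)

lemma good_add:
  fixes u v :: "'a::field"
  assumes c: "(1::'a) + 1 = 0" and "u = 0 \<or> u = 1" and "v = 0 \<or> v = 1"
  shows "u + v = 0 \<or> u + v = 1"
  using assms by auto

lemma trace_nonzero:
  assumes c: "(1::'a::{field,finite}) + 1 = 0" and q: "card (UNIV::'a set) = 2 ^ n"
  shows "\<exists>c::'a. abs_trace n c = 1"
proof (rule ccontr)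
  assume H: "\<not> ?thesis"
  have n: "n \<ge> 1" using card_ge2[where 'a='a] q by (cases n) auto
  define P :: "'a poly" where "P = (\<Sum>i<n. monom 1 (2 ^ i))"
  have ev: "poly P x = abs_trace n x" for x
    by (simp add: P_def poly_sum poly_monom abs_trace_def)
  have deg: "degree P \<le> 2 ^ (n - 1)"
    unfolding P_def
  proof (rule degree_sum_le)
    fix i assume "i \<in> {..<n}"
    hence "i \<le> n - 1" by auto
    hence "(2::nat) ^ i \<le> 2 ^ (n - 1)" by (rule power_increasing) simp
    thus "degree (monom (1::'a) (2 ^ i)) \<le> 2 ^ (n - 1)" using degree_monom_le order_trans by blast
  qed simp
  have "coeff P 1 = (\<Sum>i<n. if (2::nat) ^ i = 1 then 1 else 0)"
    by (simp add: P_def coeff_sum coeff_monom eq_commute)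
  also have "\<dots> = (\<Sum>i<n. if i = 0 then (1::'a) else 0)"
    by (rule sum.cong) auto
  also have "\<dots> = (\<Sum>i\<in>{0}. (1::'a))"
    using n by (simp add: sum.delta)
  finally have "coeff P 1 = 1" by simp
  hence P0: "P \<noteq> 0" by auto
  have "poly P x = 0" for x using H trace_01[OF c q, of x] ev[of x] by auto
  hence "{x. poly P x = 0} = UNIV" by auto
  hence "card (UNIV::'a set) \<le> degree P" using card_poly_roots_bound[OF P0] by simp
  hence "(2::nat) ^ n \<le> 2 ^ (n - 1)" using deg q by linarith
  hence "n \<le> n - 1" using power_le_imp_le_exp[of "2::nat" n "n-1"] by simp
  thus False using n by simp
qed

lemma char_sum:
  fixes w :: "'a::{field,finite}"
  assumes c: "(1::'a::{field,finite}) + 1 = 0" and q: "card (UNIV::'a set) = 2 ^ n"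
  shows "(\<Sum>\<mu>\<in>(UNIV::'a set). sgn2 (abs_trace n (\<mu> * w))) = (if w = 0 then int (card (UNIV::'a set)) else 0)"
proof (cases "w = 0")
  case True thus ?thesis by (simp add: abs_trace_def sgn2_def power_0_left)
next
  case False
  obtain c0 :: 'a where c0: "abs_trace n c0 = 1" using trace_nonzero[OF c q] by blast
  let ?S = "\<Sum>\<mu>\<in>(UNIV::'a set). sgn2 (abs_trace n \<mu>)"
  have bij: "bij (\<lambda>\<mu>::'a. \<mu> * w)"
    by (rule bij_betw_byWitness[where f'="\<lambda>\<mu>. \<mu> / w"]) (use False in auto)
  have 1: "(\<Sum>\<mu>\<in>(UNIV::'a set). sgn2 (abs_trace n (\<mu> * w))) = ?S"
    using sum.reindex_bij_betw[OF bij, of "\<lambda>\<mu>. sgn2 (abs_trace n \<mu>)"] by simp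
  have bij2: "bij (\<lambda>\<mu>::'a. \<mu> + c0)"
    by (rule bij_betw_byWitness[where f'="\<lambda>\<mu>. \<mu> - c0"]) auto
  have "?S = (\<Sum>\<mu>\<in>(UNIV::'a set). sgn2 (abs_trace n (\<mu> + c0)))"
    using sum.reindex_bij_betw[OF bij2, of "\<lambda>\<mu>. sgn2 (abs_trace n \<mu>)"] by simp
  also have "\<dots> = (\<Sum>\<mu>\<in>(UNIV::'a set). sgn2 (abs_trace n \<mu>) * sgn2 (abs_trace n c0))"
    by (simp add: trace_add[OF c] sgn2_add[OF c trace_01[OF c q] trace_01[OF c q]])
  also have "\<dots> = - ?S" using c0 by (simp add: sgn2_def sum_negf)
  finally have "?S = 0" by simp
  thus ?thesis using 1 False by simp
qed


definition Fs :: "'a::field set \<Rightarrow> 'a \<Rightarrow> int" where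
  "Fs S x = sgn2 (charf S x)"

lemma charf_01: "charf S x = 0 \<or> charf S x = 1"
  by (simp add: charf_def)

lemma walsh_split:
  fixes S :: "'a::{field,finite} set"
  assumes c: "(1::'a::{field,finite}) + 1 = 0" and q: "card (UNIV::'a set) = 2 ^ n"
  shows "walsh n S \<mu> = (\<Sum>x\<in>UNIV. Fs S x * sgn2 (abs_trace n (\<mu> * x)))"
  unfolding walsh_def Fs_def
  by (rule sum.cong[OF refl], rule sgn2_add[OF c charf_01 trace_01[OF c q]])

lemma delta_sum:
  fixes g :: "'a::finite \<Rightarrow> int"
  shows "(\<Sum>z\<in>UNIV. g z * (if z = c then Q else 0)) = g c * Q"
proof -
  have "(\<Sum>z\<in>UNIV. g z * (if z = c then Q else 0)) = (\<Sum>z\<in>UNIV. if z = c then g z * Q else 0)"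
    by (rule sum.cong) auto
  also have "\<dots> = g c * Q" by (simp add: sum.delta)
  finally show ?thesis .
qed

lemma triple_prod:
  fixes f g h :: "'b \<Rightarrow> int"
  shows "(\<Sum>x\<in>A. f x) * (\<Sum>y\<in>B. g y) * (\<Sum>z\<in>C. h z) = (\<Sum>x\<in>A. \<Sum>y\<in>B. \<Sum>z\<in>C. f x * g y * h z)"
proof -
  have "(\<Sum>x\<in>A. f x) * (\<Sum>y\<in>B. g y) * (\<Sum>z\<in>C. h z) = (\<Sum>x\<in>A. f x * (\<Sum>y\<in>B. g y) * (\<Sum>z\<in>C. h z))"
    by (simp add: sum_distrib_right)
  also have "\<dots> = (\<Sum>x\<in>A. \<Sum>y\<in>B. \<Sum>z\<in>C. f x * g y * h z)"
  proof (rule sum.cong[OF refl])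
    fix x
    have "f x * (\<Sum>y\<in>B. g y) * (\<Sum>z\<in>C. h z) = (\<Sum>y\<in>B. f x * g y * (\<Sum>z\<in>C. h z))"
      by (simp add: sum_distrib_left sum_distrib_right) (rule sum.swap)
    also have "\<dots> = (\<Sum>y\<in>B. \<Sum>z\<in>C. f x * g y * h z)"
      by (simp add: sum_distrib_left)
    finally show "f x * (\<Sum>y\<in>B. g y) * (\<Sum>z\<in>C. h z) = (\<Sum>y\<in>B. \<Sum>z\<in>C. f x * g y * h z)" .
  qed
  finally show ?thesis .
qed

lemma key:
  fixes a b :: "'a::{field,finite}"
  assumes c: "(1::'a) + 1 = 0" and q: "card (UNIV::'a set) = 2 ^ n"
  shows "(\<Sum>\<mu>\<in>UNIV. walsh n S (a * \<mu>) * walsh n S (b * \<mu>) * walsh n S \<mu>)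
    = int (card (UNIV::'a set)) * (\<Sum>x\<in>UNIV. \<Sum>y\<in>UNIV. Fs S x * Fs S y * Fs S (a * x + b * y))"
proof -
  define chi where "chi = (\<lambda>t::'a. sgn2 (abs_trace n t))"
  define F where "F = Fs S"
  let ?q = "int (card (UNIV::'a set))"
  have chi3: "chi (a * \<mu> * x) * chi (b * \<mu> * y) * chi (\<mu> * z) = chi (\<mu> * (a * x + b * y + z))" for \<mu> x y z
  proof -
    have e: "\<mu> * (a * x + b * y + z) = a * \<mu> * x + b * \<mu> * y + \<mu> * z" by (simp add: algebra_simps)
    show ?thesis unfolding e chi_def trace_add[OF c]
      by (simp add: sgn2_add[OF c] good_add[OF c] trace_01[OF c q])
  qed
  have A: "walsh n S (a * \<mu>) * walsh n S (b * \<mu>) * walsh n S \<mu>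
     = (\<Sum>x\<in>UNIV. \<Sum>y\<in>UNIV. \<Sum>z\<in>UNIV. F x * F y * F z * chi (\<mu> * (a * x + b * y + z)))" for \<mu>
  proof -
    have "walsh n S (a * \<mu>) * walsh n S (b * \<mu>) * walsh n S \<mu>
      = (\<Sum>x\<in>UNIV. F x * chi (a * \<mu> * x)) * (\<Sum>y\<in>UNIV. F y * chi (b * \<mu> * y)) * (\<Sum>z\<in>UNIV. F z * chi (\<mu> * z))"
      unfolding walsh_split[OF c q] F_def chi_def ..
    also have "\<dots> = (\<Sum>x\<in>UNIV. \<Sum>y\<in>UNIV. \<Sum>z\<in>UNIV. (F x * chi (a * \<mu> * x)) * (F y * chi (b * \<mu> * y)) * (F z * chi (\<mu> * z)))"
      by (rule triple_prod)
    also have "\<dots> = (\<Sum>x\<in>UNIV. \<Sum>y\<in>UNIV. \<Sum>z\<in>UNIV. F x * F y * F z * chi (\<mu> * (a * x + b * y + z)))"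
      by (intro sum.cong refl) (simp only: chi3[symmetric], simp add: mult_ac)
    finally show ?thesis .
  qed
  have "(\<Sum>\<mu>\<in>UNIV. walsh n S (a * \<mu>) * walsh n S (b * \<mu>) * walsh n S \<mu>)
     = (\<Sum>\<mu>\<in>UNIV. \<Sum>x\<in>UNIV. \<Sum>y\<in>UNIV. \<Sum>z\<in>UNIV. F x * F y * F z * chi (\<mu> * (a * x + b * y + z)))"
    by (simp only: A)
  also have "\<dots> = (\<Sum>x\<in>UNIV. \<Sum>\<mu>\<in>UNIV. \<Sum>y\<in>UNIV. \<Sum>z\<in>UNIV. F x * F y * F z * chi (\<mu> * (a * x + b * y + z)))"
    by (rule sum.swap)
  also have "\<dots> = (\<Sum>x\<in>UNIV. \<Sum>y\<in>UNIV. \<Sum>\<mu>\<in>UNIV. \<Sum>z\<in>UNIV. F x * F y * F z * chi (\<mu> * (a * x + b * y + z)))"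
  proof (rule sum.cong[OF refl])
    fix x show "(\<Sum>\<mu>\<in>UNIV. \<Sum>y\<in>UNIV. \<Sum>z\<in>UNIV. F x * F y * F z * chi (\<mu> * (a * x + b * y + z)))
      = (\<Sum>y\<in>UNIV. \<Sum>\<mu>\<in>UNIV. \<Sum>z\<in>UNIV. F x * F y * F z * chi (\<mu> * (a * x + b * y + z)))"
      by (rule sum.swap)
  qed
  also have "\<dots> = (\<Sum>x\<in>UNIV. \<Sum>y\<in>UNIV. \<Sum>z\<in>UNIV. \<Sum>\<mu>\<in>UNIV. F x * F y * F z * chi (\<mu> * (a * x + b * y + z)))"
    by (rule sum.cong[OF refl], rule sum.cong[OF refl], rule sum.swap)
  also have "\<dots> = (\<Sum>x\<in>UNIV. \<Sum>y\<in>UNIV. \<Sum>z\<in>UNIV. F x * F y * F z * (if z = a * x + b * y then ?q else 0))"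
  proof (intro sum.cong refl)
    fix x y z
    have "(\<Sum>\<mu>\<in>UNIV. F x * F y * F z * chi (\<mu> * (a * x + b * y + z)))
       = F x * F y * F z * (\<Sum>\<mu>\<in>UNIV. chi (\<mu> * (a * x + b * y + z)))"
      by (simp add: sum_distrib_left)
    also have "\<dots> = F x * F y * F z * (if a * x + b * y + z = 0 then ?q else 0)"
      unfolding chi_def char_sum[OF c q] ..
    also have "(a * x + b * y + z = 0) = (z = a * x + b * y)"
      using neg_self[OF c, of "a * x + b * y"] by (metis add.commute add_eq_0_iff)
    finally show "(\<Sum>\<mu>\<in>UNIV. F x * F y * F z * chi (\<mu> * (a * x + b * y + z))) =
         F x * F y * F z * (if z = a * x + b * y then ?q else 0)" .
  qed
  also have "\<dots> = (\<Sum>x\<in>UNIV. \<Sum>y\<in>UNIV. F x * F y * F (a * x + b * y) * ?q)"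
    by (intro sum.cong refl delta_sum)
  also have "\<dots> = ?q * (\<Sum>x\<in>UNIV. \<Sum>y\<in>UNIV. F x * F y * F (a * x + b * y))"
    by (simp add: sum_distrib_left mult_ac)
  finally show ?thesis unfolding F_def .
qed


lemma sum_ind: "(\<Sum>z\<in>(UNIV::'a::finite set). (if z \<in> S then 1 else 0::int)) = int (card S)"
proof -
  have "(\<Sum>z\<in>(UNIV::'a set). (if z \<in> S then 1 else 0::int)) = (\<Sum>z\<in>S. 1)"
    by (rule sum.mono_neutral_cong_right) auto
  thus ?thesis by simp
qed

lemma sum_ind_lin:
  fixes a b :: "'a::{field,finite}"
  assumes "b \<noteq> 0"
  shows "(\<Sum>y\<in>UNIV. (if a + b * y \<in> S then 1 else 0::int)) = int (card S)"
proof -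
  have bij: "bij (\<lambda>y. a + b * y)"
    by (rule bij_betw_byWitness[where f'="\<lambda>z. (z - a) / b"]) (use assms in auto)
  show ?thesis
    using sum.reindex_bij_betw[OF bij, of "\<lambda>z. if z \<in> S then 1 else 0::int"] sum_ind[of S] by simp
qed

lemma card_N3:
  fixes a b :: "'a::{field,finite}"
  assumes c: "(1::'a) + 1 = 0"
  shows "int (N3 S a b 1) = (\<Sum>x\<in>UNIV. \<Sum>y\<in>UNIV.
      (if x \<in> S then 1 else 0) * (if y \<in> S then 1 else 0) * (if a * x + b * y \<in> S then 1 else 0::int))"
proof -
  let ?P = "{(x, y). x \<in> S \<and> y \<in> S \<and> a * x + b * y \<in> S}"
  let ?N = "{(x, y, z). x \<in> S \<and> y \<in> S \<and> z \<in> S \<and> a * x + b * y + 1 * z = 0}"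
  have eq: "(a * x + b * y + z = 0) = (z = a * x + b * y)" for x y z
    using neg_self[OF c, of "a * x + b * y"] by (metis add.commute add_eq_0_iff)
  have bij: "bij_betw (\<lambda>(x, y). (x, y, a * x + b * y)) ?P ?N"
    by (rule bij_betw_byWitness[where f'="\<lambda>(x, y, z). (x, y)"]) (auto simp: eq)
  have "N3 S a b 1 = card ?P" unfolding N3_def using bij_betw_same_card[OF bij] by simp
  also have "int (card ?P) = (\<Sum>p\<in>UNIV. if p \<in> ?P then 1 else 0::int)" by (rule sum_ind[symmetric])
  also have "\<dots> = (\<Sum>p\<in>UNIV \<times> UNIV. if p \<in> ?P then 1 else 0::int)" by simp
  also have "\<dots> = (\<Sum>x\<in>UNIV. \<Sum>y\<in>UNIV. if (x, y) \<in> ?P then 1 else 0::int)"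
    by (rule sum.cartesian_product')
  also have "\<dots> = (\<Sum>x\<in>UNIV. \<Sum>y\<in>UNIV.
      (if x \<in> S then 1 else 0) * (if y \<in> S then 1 else 0) * (if a * x + b * y \<in> S then 1 else 0::int))"
    by (intro sum.cong refl) auto
  finally show ?thesis .
qed


lemma expand:
  fixes a b :: "'a::{field,finite}"
  assumes c: "(1::'a) + 1 = 0" and a: "a \<noteq> 0" and b: "b \<noteq> 0"
  shows "(\<Sum>x\<in>UNIV. \<Sum>y\<in>UNIV. Fs S x * Fs S y * Fs S (a * x + b * y))
    = int (card (UNIV::'a set))^2 - 6 * int (card (UNIV::'a set)) * int (card S) + 12 * int (card S) ^ 2
      - 8 * int (N3 S a b 1)"
proof -
  define u where "u x = (if x \<in> S then 1 else 0::int)" for x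
  let ?q = "int (card (UNIV::'a set))"
  let ?k = "int (card S)"
  have F: "Fs S x = 1 - 2 * u x" for x by (simp add: Fs_def sgn2_def charf_def u_def)
  have pt: "Fs S x * Fs S y * Fs S (a * x + b * y) = 1 - 2 * u x - 2 * u y - 2 * u (a * x + b * y)
     + 4 * (u x * u y) + 4 * (u x * u (a * x + b * y)) + 4 * (u y * u (a * x + b * y))
     - 8 * (u x * u y * u (a * x + b * y))" for x y
    unfolding F by (simp add: algebra_simps)
  have su: "(\<Sum>x\<in>UNIV. u x) = ?k" unfolding u_def by (rule sum_ind)
  have sw: "(\<Sum>y\<in>UNIV. u (a * x + b * y)) = ?k" for x unfolding u_def by (rule sum_ind_lin[OF b])
  have sw2: "(\<Sum>x\<in>UNIV. u (a * x + b * y)) = ?k" for y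
    unfolding u_def using sum_ind_lin[OF a, of "b * y" S] by (simp add: add.commute)
  have s1: "(\<Sum>x\<in>(UNIV::'a set). \<Sum>y\<in>(UNIV::'a set). 1::int) = ?q^2" by (simp add: power2_eq_square)
  have s2: "(\<Sum>x\<in>UNIV. \<Sum>y\<in>(UNIV::'a set). u x) = ?q * ?k"
    using su sum_distrib_right[of u UNIV ?q, symmetric] by (simp add: mult.commute)
  have s3: "(\<Sum>x\<in>(UNIV::'a set). \<Sum>y\<in>UNIV. u y) = ?q * ?k" using su by simp
  have s4: "(\<Sum>x\<in>UNIV. \<Sum>y\<in>UNIV. u (a * x + b * y)) = ?q * ?k" using sw by simp
  have s5: "(\<Sum>x\<in>UNIV. \<Sum>y\<in>UNIV. u x * u y) = ?k^2"
    using su by (simp add: sum_distrib_left[symmetric] sum_distrib_right[symmetric] power2_eq_square)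
  have s6: "(\<Sum>x\<in>UNIV. \<Sum>y\<in>UNIV. u x * u (a * x + b * y)) = ?k^2"
    using su sw by (simp add: sum_distrib_left[symmetric] sum_distrib_right[symmetric] power2_eq_square)
  have s7: "(\<Sum>x\<in>UNIV. \<Sum>y\<in>UNIV. u y * u (a * x + b * y)) = ?k^2"
  proof -
    have "(\<Sum>x\<in>UNIV. \<Sum>y\<in>UNIV. u y * u (a * x + b * y)) = (\<Sum>y\<in>UNIV. \<Sum>x\<in>UNIV. u y * u (a * x + b * y))"
      by (rule sum.swap)
    also have "\<dots> = ?k^2" using su sw2 by (simp add: sum_distrib_left[symmetric] sum_distrib_right[symmetric] power2_eq_square)
    finally show ?thesis .
  qed
  have s8: "(\<Sum>x\<in>UNIV. \<Sum>y\<in>UNIV. u x * u y * u (a * x + b * y)) = int (N3 S a b 1)"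
    unfolding card_N3[OF c] u_def ..
  have "(\<Sum>x\<in>UNIV. \<Sum>y\<in>UNIV. Fs S x * Fs S y * Fs S (a * x + b * y))
     = (\<Sum>x\<in>UNIV. \<Sum>y\<in>UNIV. 1 - 2 * u x - 2 * u y - 2 * u (a * x + b * y)
     + 4 * (u x * u y) + 4 * (u x * u (a * x + b * y)) + 4 * (u y * u (a * x + b * y))
     - 8 * (u x * u y * u (a * x + b * y)))" by (simp only: pt)
  also have "\<dots> = (\<Sum>x\<in>(UNIV::'a set). \<Sum>y\<in>(UNIV::'a set). 1::int) - 2 * (\<Sum>x\<in>UNIV. \<Sum>y\<in>(UNIV::'a set). u x)
     - 2 * (\<Sum>x\<in>(UNIV::'a set). \<Sum>y\<in>UNIV. u y) - 2 * (\<Sum>x\<in>UNIV. \<Sum>y\<in>UNIV. u (a * x + b * y))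
     + 4 * (\<Sum>x\<in>UNIV. \<Sum>y\<in>UNIV. u x * u y) + 4 * (\<Sum>x\<in>UNIV. \<Sum>y\<in>UNIV. u x * u (a * x + b * y))
     + 4 * (\<Sum>x\<in>UNIV. \<Sum>y\<in>UNIV. u y * u (a * x + b * y))
     - 8 * (\<Sum>x\<in>UNIV. \<Sum>y\<in>UNIV. u x * u y * u (a * x + b * y))"
    by (simp only: sum.distrib sum_subtractf sum_distrib_left)
  also have "\<dots> = ?q^2 - 6 * ?q * ?k + 12 * ?k^2 - 8 * int (N3 S a b 1)"
    unfolding s1 s2 s3 s4 s5 s6 s7 s8 by simp
  finally show ?thesis .
qed


lemma walsh0:
  fixes S :: "'a::{field,finite} set"
  assumes c: "(1::'a) + 1 = 0" and q: "card (UNIV::'a set) = 2 ^ n"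
  shows "walsh n S 0 = int (card (UNIV::'a set)) - 2 * int (card S)"
proof -
  have "walsh n S 0 = (\<Sum>x\<in>UNIV. 1 - 2 * (if x \<in> S then 1 else 0::int))"
    unfolding walsh_split[OF c q]
    by (intro sum.cong refl) (simp add: Fs_def sgn2_def charf_def abs_trace_def power_0_left)
  also have "\<dots> = int (card (UNIV::'a set)) - 2 * int (card S)"
    by (simp add: sum_subtractf sum_distrib_left[symmetric] sum_ind)
  finally show ?thesis .
qed

lemma walsh_sum:
  fixes S :: "'a::{field,finite} set"
  assumes c: "(1::'a) + 1 = 0" and q: "card (UNIV::'a set) = 2 ^ n"
  shows "(\<Sum>\<mu>\<in>UNIV. walsh n S \<mu>) = int (card (UNIV::'a set)) * Fs S 0"
proof -
  have "(\<Sum>\<mu>\<in>UNIV. walsh n S \<mu>) = (\<Sum>\<mu>\<in>UNIV. \<Sum>x\<in>UNIV. Fs S x * sgn2 (abs_trace n (\<mu> * x)))"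
    unfolding walsh_split[OF c q] ..
  also have "\<dots> = (\<Sum>x\<in>UNIV. \<Sum>\<mu>\<in>UNIV. Fs S x * sgn2 (abs_trace n (\<mu> * x)))"
    by (rule sum.swap)
  also have "\<dots> = (\<Sum>x\<in>UNIV. Fs S x * (if x = 0 then int (card (UNIV::'a set)) else 0))"
    by (intro sum.cong refl) (simp add: sum_distrib_left[symmetric] char_sum[OF c q])
  also have "\<dots> = Fs S 0 * int (card (UNIV::'a set))" by (rule delta_sum)
  finally show ?thesis by simp
qed

lemma powi_bij:
  fixes d :: int
  assumes d: "gcd d (int (card (UNIV::'a::{field,finite} set) - 1)) = 1" and d0: "d \<noteq> 0"
  shows "bij (\<lambda>\<mu>::'a. \<mu> powi d)"
proof -
  obtain u v where uv: "u * d + v * int (card (UNIV::'a set) - 1) = 1"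
    using bezout_int[of d "int (card (UNIV::'a set) - 1)"] d by auto
  have inv: "x = (x powi d) powi u" if x: "x \<noteq> 0" for x :: 'a
  proof -
    have "x = x powi (u * d + v * int (card (UNIV::'a set) - 1))" using uv by simp
    also have "\<dots> = x powi (d * u) * x powi (int (card (UNIV::'a set) - 1) * v)"
      using x by (simp add: power_int_add mult.commute)
    also have "\<dots> = (x powi d) powi u" using x
      by (simp only: power_int_mult power_int_of_nat fermat[OF x]) simp
    finally show ?thesis .
  qed
  have "inj (\<lambda>\<mu>::'a. \<mu> powi d)"
  proof (rule injI)
    fix x y :: 'a assume e: "x powi d = y powi d"
    show "x = y"
    proof (cases "x = 0 \<or> y = 0")
      case True thus ?thesis using e d0 by (metis power_int_eq_0_iff)
    next
      case False thus ?thesis using inv e by metis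
    qed
  qed
  thus ?thesis using finite_UNIV_inj_surj[of "\<lambda>\<mu>::'a. \<mu> powi d"] by (simp add: bij_def)
qed


theorem lemma5:
  fixes B E :: "'a::{field,finite} set" and n k :: nat and d :: int and a b :: 'a
  assumes q: "card (UNIV::'a set) = 2 ^ n"
    and char2: "(1::'a) + 1 = 0"
    and cardB: "card B = k"
    and d: "gcd d (int (card (UNIV::'a set) - 1)) = 1"
    and walsh_eq: "\<forall>\<mu>::'a. walsh n B \<mu> = walsh n E (\<mu> powi d)"
    and a: "a \<noteq> 0" and b: "b \<noteq> 0"
  shows "(\<Sum>x\<in>(UNIV::'a set). \<Sum>y\<in>(UNIV::'a set).
            sgn2 (charf B x + charf B y + charf B (a * x + b * y)))
         = int (card (UNIV::'a set))^2 - 6 * int (card (UNIV::'a set)) * int k + 12 * int k ^ 2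
           - 8 * int (N3 E (a powi d) (b powi d) 1)
       \<and> N3 B a b 1 = N3 E (a powi d) (b powi d) 1"
proof -
  let ?q = "int (card (UNIV::'a set))"
  have qpos: "?q > 0" using card_ge2[where 'a='a] by simp
  have d0: "d \<noteq> 0"
  proof
    assume d0: "d = 0"
    have "int (card (UNIV::'a set) - 1) = 1" using d d0 by simp
    hence q2: "?q = 2" using card_ge2[where 'a='a] by linarith
    have W: "walsh n B \<mu> = walsh n E 1" for \<mu> using walsh_eq d0 by simp
    have "(\<Sum>\<mu>\<in>(UNIV::'a set). walsh n B \<mu>) = ?q * walsh n E 1" by (simp add: W)
    hence "walsh n E 1 = Fs B 0" using walsh_sum[OF char2 q, of B] qpos by simp
    hence "walsh n B 0 = 1 \<or> walsh n B 0 = -1" using W[of 0] by (simp add: Fs_def sgn2_def)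
    thus False using walsh0[OF char2 q, of B] q2 by presburger
  qed
  have bij: "bij (\<lambda>\<mu>::'a. \<mu> powi d)" by (rule powi_bij[OF d d0])
  define a' where "a' = a powi d"
  define b' where "b' = b powi d"
  have a': "a' \<noteq> 0" and b': "b' \<noteq> 0" using a b by (simp_all add: a'_def b'_def)
  have "?q * (\<Sum>x\<in>UNIV. \<Sum>y\<in>UNIV. Fs B x * Fs B y * Fs B (a * x + b * y))
      = (\<Sum>\<mu>\<in>UNIV. walsh n B (a * \<mu>) * walsh n B (b * \<mu>) * walsh n B \<mu>)"
    by (rule key[OF char2 q, symmetric])
  also have "\<dots> = (\<Sum>\<mu>\<in>UNIV. walsh n E (a' * \<mu> powi d) * walsh n E (b' * \<mu> powi d) * walsh n E (\<mu> powi d))"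
    using walsh_eq by (simp add: a'_def b'_def power_int_mult_distrib)
  also have "\<dots> = (\<Sum>\<nu>\<in>UNIV. walsh n E (a' * \<nu>) * walsh n E (b' * \<nu>) * walsh n E \<nu>)"
    using sum.reindex_bij_betw[OF bij, of "\<lambda>\<nu>. walsh n E (a' * \<nu>) * walsh n E (b' * \<nu>) * walsh n E \<nu>"]
    by simp
  also have "\<dots> = ?q * (\<Sum>x\<in>UNIV. \<Sum>y\<in>UNIV. Fs E x * Fs E y * Fs E (a' * x + b' * y))"
    by (rule key[OF char2 q])
  finally have TT: "(\<Sum>x\<in>UNIV. \<Sum>y\<in>UNIV. Fs B x * Fs B y * Fs B (a * x + b * y))
      = (\<Sum>x\<in>UNIV. \<Sum>y\<in>UNIV. Fs E x * Fs E y * Fs E (a' * x + b' * y))" using qpos by simp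
  have cardE: "card E = k"
    using walsh_eq[rule_format, of 0] d0 walsh0[OF char2 q, of B] walsh0[OF char2 q, of E] cardB by simp
  have LHS: "(\<Sum>x\<in>(UNIV::'a set). \<Sum>y\<in>(UNIV::'a set).
            sgn2 (charf B x + charf B y + charf B (a * x + b * y)))
      = (\<Sum>x\<in>UNIV. \<Sum>y\<in>UNIV. Fs B x * Fs B y * Fs B (a * x + b * y))"
    by (intro sum.cong refl)
       (simp add: Fs_def sgn2_add[OF char2] good_add[OF char2] charf_01)
  have eB: "(\<Sum>x\<in>UNIV. \<Sum>y\<in>UNIV. Fs B x * Fs B y * Fs B (a * x + b * y))
      = ?q^2 - 6 * ?q * int k + 12 * int k ^ 2 - 8 * int (N3 B a b 1)"
    using expand[OF char2 a b, of B] cardB by simp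
  have eE: "(\<Sum>x\<in>UNIV. \<Sum>y\<in>UNIV. Fs E x * Fs E y * Fs E (a' * x + b' * y))
      = ?q^2 - 6 * ?q * int k + 12 * int k ^ 2 - 8 * int (N3 E a' b' 1)"
    using expand[OF char2 a' b', of E] cardE by simp
  show ?thesis
    using LHS TT eB eE unfolding a'_def b'_def by simp
qed

end
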